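(* In the M/M/1 setting below, $\mathrm{SW}^P_{opt}\le\mathrm{SW}^C_{opt}=\mathrm{SW}^S_{opt}$ holds in each of the following cases: (i) $\xi(0)\ge\bar\lambda$; (ii) $\xi(0)<\bar\lambda$ and $\lambda_{\max}\le(1+\epsilon)\lambda$, where $\epsilon=\sqrt{C/(R\mu)}$.
   Context: Setting: an M/M/1 queue with true (deterministic) Poisson arrival rate $\lambda>0$ and exponential service times with rate $\mu$, so $W(x)=1/(\mu-x)$ for $x\in[0,\mu)$. Each served customer receives reward $R$, pays fee $p$ (a transfer payment from the social optimizer's viewpoint), and incurs waiting cost $C>0$ per unit time, with $R>C/\mu$. Customers' beliefs about the arrival rate are described by a non-degenerate nonnegative random variable $\Lambda$ whose support has minimum $\lambda_{\min}$ and maximum $\lambda_{\max}$, with $0\le\lambda_{\min}<\lambda<\lambda_{\max}<\mu$. For $0\le p<R-C/\mu$, $\xi(p)=\mu-C/(R-p)$ (so $\xi(0)=\mu-C/R$). Let $\bar\lambda=\mu-1/\mathbb{E}[1/(\mu-\Lambda)]$. Joining probabilities: classical $q^C(p)=\min\{\xi(p)/\lambda,1\}$; shared belief $q^S(p)=1$ if $C\,\mathbb{E}[W(\Lambda)]\le R-p$, otherwise the unique $q\in[0,1)$ with $C\,\mathbb{E}[W(q\Lambda)]=R-p$; private belief $Q(p)=\min\{\xi(p)/\Lambda,1\}$. Social welfare rates: $\mathrm{SW}^C(p)=\lambda q^C(p)\,(R-C\,W(\lambda q^C(p)))$, $\mathrm{SW}^S(p)=\lambda q^S(p)\,(R-C\,W(\lambda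 q^S(p)))$, $\mathrm{SW}^P(p)=\mathbb{E}[\lambda Q(p)\,(R-C\,W(\lambda Q(p)))]$. Optimal values: $\mathrm{SW}^X_{opt}=\sup_{0\le p<R-C/\mu}\mathrm{SW}^X(p)$ for $X\in\{C,S,P\}$. *)

theory Defs
  imports "HOL-Probability.Probability"
begin

text \<open>M/M/1 sojourn time W(x) = 1/(mu - x), intended for 0 <= x < mu.\<close>
definition W :: "real \<Rightarrow> real \<Rightarrow> real" where
  "W mu x = 1 / (mu - x)"

definition xi :: "real \<Rightarrow> real \<Rightarrow> real \<Rightarrow> real \<Rightarrow> real" where
  "xi mu C R p = mu - C / (R - p)"

definition lbar :: "'a measure \<Rightarrow> ('a \<Rightarrow> real) \<Rightarrow> real \<Rightarrow> real" where
  "lbar M L mu = mu - 1 / (\<integral>\<omega>. 1 / (mu - L \<omega>) \<partial>M)"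

definition qC :: "real \<Rightarrow> real \<Rightarrow> real \<Rightarrow> real \<Rightarrow> real \<Rightarrow> real" where
  "qC lam mu C R p = min (xi mu C R p / lam) 1"

definition qS :: "'a measure \<Rightarrow> ('a \<Rightarrow> real) \<Rightarrow> real \<Rightarrow> real \<Rightarrow> real \<Rightarrow> real \<Rightarrow> real" where
  "qS M L mu C R p =
     (if C * (\<integral>\<omega>. W mu (L \<omega>) \<partial>M) \<le> R - p then 1
      else (THE q. 0 \<le> q \<and> q < 1 \<and> C * (\<integral>\<omega>. W mu (q * L \<omega>) \<partial>M) = R - p))"

text \<open>Private-belief joining probability min{xi(p)/Lambda, 1}, with the convention
  xi(p)/0 = +infinity (so the minimum is 1 when Lambda = 0).\<close>
definition QP :: "real \<Rightarrow> real \<Rightarrow> real \<Rightarrow> real \<Rightarrow> real \<Rightarrow> real" where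
  "QP mu C R p l = (if l \<le> xi mu C R p then 1 else xi mu C R p / l)"

definition SW :: "real \<Rightarrow> real \<Rightarrow> real \<Rightarrow> real \<Rightarrow> real \<Rightarrow> real" where
  "SW lam mu C R q = lam * q * (R - C * W mu (lam * q))"

definition SWC :: "real \<Rightarrow> real \<Rightarrow> real \<Rightarrow> real \<Rightarrow> real \<Rightarrow> real" where
  "SWC lam mu C R p = SW lam mu C R (qC lam mu C R p)"

definition SWS :: "'a measure \<Rightarrow> ('a \<Rightarrow> real) \<Rightarrow> real \<Rightarrow> real \<Rightarrow> real \<Rightarrow> real \<Rightarrow> real \<Rightarrow> real" where
  "SWS M L lam mu C R p = SW lam mu C R (qS M L mu C R p)"

definition SWP :: "'a measure \<Rightarrow> ('a \<Rightarrow> real) \<Rightarrow> real \<Rightarrow> real \<Rightarrow> real \<Rightarrow> real \<Rightarrow> real \<Rightarrow> real" where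
  "SWP M L lam mu C R p = (\<integral>\<omega>. SW lam mu C R (QP mu C R p (L \<omega>)) \<partial>M)"

definition opt :: "real \<Rightarrow> real \<Rightarrow> real \<Rightarrow> (real \<Rightarrow> real) \<Rightarrow> real" where
  "opt mu C R f = (SUP p\<in>{0..<R - C / mu}. f p)"

end

theory Submission imports Defs begin

lemma key_h:
  fixes a b R C mu :: real
  assumes "0 < b" "0 < a" "R > 0" "C > 0"
    and "C * mu = R * b^2 \<or> (C * mu < R * b^2 \<and> b \<le> a)"
  shows "R*b + C*mu/b \<le> R*a + C*mu/a"
proof -
  have "(a-b)*(R*a*b - C*mu) \<ge> 0"
    using assms(5)
  proof
    assume h: "C * mu = R * b^2"
    have "(a-b)*(R*a*b - C*mu) = R*b*(a-b)^2" unfolding h by (simp add: power2_eq_square algebra_simps)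
    then show ?thesis using assms by simp
  next
    assume h: "C * mu < R * b^2 \<and> b \<le> a"
    have "R*a*b \<ge> R*b^2" using assms h by (simp add: power2_eq_square mult_left_mono)
    then have "R*a*b - C*mu \<ge> 0" using h by linarith
    then show ?thesis using h by (intro mult_nonneg_nonneg) auto
  qed
  then have "R*b*(a*b) + C*mu*a \<le> R*a*(a*b) + C*mu*b" by (simp add: algebra_simps)
  then show ?thesis using assms(1,2) by (simp add: field_simps)
qed

lemma f_max:
  fixes x lam mu C R s :: real
  assumes "0 < s" "s < 1" "0 < mu" "0 < lam" "lam < mu" "s^2 = C/(R*mu)" "C > 0" "R > 0"
    "0 \<le> x" "x \<le> lam"
  shows "x * (R - C * W mu x) \<le> min (mu*(1-s)) lam * (R - C * W mu (min (mu*(1-s)) lam))"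
proof -
  define m where "m = min (mu*(1-s)) lam"
  define a where "a = mu - x"
  define b where "b = mu - m"
  have b0: "0 < b" using assms unfolding b_def m_def by auto
  have a0: "0 < a" using assms unfolding a_def by auto
  have Cmu: "C * mu = R * (mu * s) ^ 2"
  proof -
    have "R * (mu * s^2) = C" using assms by (simp add: field_simps)
    then show ?thesis by (simp add: power2_eq_square algebra_simps)
  qed
  have "C * mu = R * b^2 \<or> (C * mu < R * b^2 \<and> b \<le> a)"
  proof (cases "mu*(1-s) \<le> lam")
    case True then have "b = mu * s" unfolding b_def m_def by (auto simp: algebra_simps)
    then show ?thesis using Cmu by simp
  next
    case False then have "b = mu - lam" "mu - lam > mu * s" unfolding b_def m_def by (auto simp: algebra_simps)
    moreover have "b^2 > (mu * s)^2" using assms calculation by (intro power_strict_mono) auto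
    ultimately show ?thesis using Cmu assms unfolding a_def by simp
  qed
  from key_h[OF b0 a0 assms(8,7) this] have h: "R*b + C*mu/b \<le> R*a + C*mu/a" .
  have ex: "x * (R - C * W mu x) = mu*R + C - (R*a + C*mu/a)"
    unfolding W_def using a0 unfolding a_def by (simp add: field_simps)
  have em: "m * (R - C * W mu m) = mu*R + C - (R*b + C*mu/b)"
    unfolding W_def using b0 unfolding b_def by (simp add: field_simps)
  show ?thesis using h ex em unfolding m_def by linarith
qed
lemma lip_pt:
  fixes a b l mu lmax :: real
  assumes "0 \<le> a" "a \<le> 1" "0 \<le> b" "b \<le> 1" "0 \<le> l" "l \<le> lmax" "lmax < mu"
  shows "\<bar>W mu (a * l) - W mu (b * l)\<bar> \<le> lmax / (mu - lmax)^2 * \<bar>a - b\<bar>"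
proof -
  define c where "c = mu - lmax"
  have c0: "c > 0" using assms unfolding c_def by simp
  have al: "a * l \<le> l" "b * l \<le> l" using assms by (auto intro: mult_left_le_one_le)
  define d1 where "d1 = mu - a * l"
  define d2 where "d2 = mu - b * l"
  have d1: "d1 \<ge> c" using al assms unfolding d1_def c_def by linarith
  have d2: "d2 \<ge> c" using al assms unfolding d2_def c_def by linarith
  have eq: "W mu (a * l) - W mu (b * l) = (a - b) * l / (d1 * d2)"
    unfolding W_def d1_def[symmetric] d2_def[symmetric] using d1 d2 c0
    by (simp add: field_simps d1_def d2_def)
  have "d1 * d2 \<ge> c^2" using d1 d2 c0 by (simp add: power2_eq_square mult_mono)
  then have "\<bar>a - b\<bar> * l / (d1 * d2) \<le> \<bar>a - b\<bar> * lmax / c^2"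
    using c0 assms by (intro frac_le mult_left_mono) auto
  moreover have "\<bar>W mu (a * l) - W mu (b * l)\<bar> = \<bar>a - b\<bar> * l / (d1 * d2)"
    unfolding eq using d1 d2 c0 assms by (simp add: abs_mult)
  ultimately show ?thesis unfolding c_def by (simp add: field_simps)
qed

theorem theorem4:
  fixes M :: "'a measure" and L :: "'a \<Rightarrow> real"
    and lam mu C R lmin lmax :: real
  assumes P: "prob_space M"
    and Lmeas: "L \<in> borel_measurable M"
    and Lnonneg: "AE \<omega> in M. 0 \<le> L \<omega>"
    and nondeg: "\<not> (\<exists>c. AE \<omega> in M. L \<omega> = c)"
    and supp_bounds: "AE \<omega> in M. lmin \<le> L \<omega> \<and> L \<omega> \<le> lmax"
    and supp_min: "\<And>e. e > 0 \<Longrightarrow> measure M {\<omega>\<in>space M. L \<omega> < lmin + e} > 0"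
    and supp_max: "\<And>e. e > 0 \<Longrightarrow> measure M {\<omega>\<in>space M. L \<omega> > lmax - e} > 0"
    and lam_pos: "0 < lam"
    and C_pos: "0 < C"
    and R_gt: "R > C / mu"
    and order: "0 \<le> lmin" "lmin < lam" "lam < lmax" "lmax < mu"
    and cases: "xi mu C R 0 \<ge> lbar M L mu \<or>
                (xi mu C R 0 < lbar M L mu \<and> lmax \<le> (1 + sqrt (C / (R * mu))) * lam)"
  shows "opt mu C R (SWP M L lam mu C R) \<le> opt mu C R (SWC lam mu C R)
       \<and> opt mu C R (SWC lam mu C R) = opt mu C R (SWS M L lam mu C R)"
proof -
  interpret prob_space M by (rule P)
  note pspace[simp] = prob_space.prob_space[OF P]
  have mu_pos: "0 < mu" using order lam_pos by linarith
  have Cmu_pos: "C / mu > 0" using C_pos mu_pos by simp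
  have R_pos: "0 < R" using R_gt Cmu_pos by linarith
  have RmuC: "C < R * mu" using R_gt mu_pos by (simp add: field_simps)
  have frac_lt1: "C / (R * mu) < 1" using RmuC R_pos mu_pos by simp
  have frac_pos: "C / (R * mu) > 0" using C_pos R_pos mu_pos by simp
  define s where "s = sqrt (C / (R * mu))"
  have s_pos: "0 < s" unfolding s_def using frac_pos by simp
  have s_lt1: "s < 1" unfolding s_def using frac_lt1 by simp
  have s2: "s^2 = C / (R * mu)" unfolding s_def using frac_pos by simp
  define xs where "xs = mu * (1 - s)"
  define m where "m = min xs lam"
  define f where "f x = x * (R - C * W mu x)" for x
  have SW_eq: "SW lam mu C R q = f (lam * q)" for q by (simp add: SW_def f_def)
  have fmax: "f x \<le> f m" if "0 \<le> x" "x \<le> lam" for x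
    unfolding f_def m_def xs_def
    using f_max[OF s_pos s_lt1 mu_pos lam_pos _ s2 C_pos R_pos that] order by linarith
  have xs_pos: "0 < xs" unfolding xs_def using s_lt1 mu_pos by simp
  have m_pos: "0 < m" unfolding m_def using xs_pos lam_pos by simp
  have m_le: "m \<le> lam" unfolding m_def by simp
  define A where "A = {0..<R - C / mu}"
  have A0: "0 \<in> A" unfolding A_def using R_gt by simp
  have A_ne: "A \<noteq> {}" using A0 by blast
  have xi_pos: "0 < xi mu C R p" if "p \<in> A" for p
  proof -
    have "R - p > C / mu" using that unfolding A_def by simp
    then have "R - p > 0" using Cmu_pos by linarith
    then have "C / (R - p) < mu" using \<open>R - p > C / mu\<close> mu_pos C_pos by (simp add: field_simps)
    then show ?thesis unfolding xi_def by simp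
  qed
  define p0 where "p0 = R - C / (mu * s)"
  have p0A: "p0 \<in> A"
  proof -
    have "C / (mu * s) \<le> R"
    proof -
      have "C = R * mu * s^2" using s2 R_pos mu_pos by (simp add: field_simps)
      also have "\<dots> \<le> R * mu * s" using s_pos s_lt1 R_pos mu_pos
        by (intro mult_left_mono) (auto simp: power2_eq_square)
      finally show ?thesis using s_pos mu_pos by (simp add: field_simps)
    qed
    moreover have "C / (mu * s) > C / mu" using s_pos s_lt1 mu_pos C_pos
      by (intro divide_strict_left_mono) auto
    ultimately show ?thesis unfolding A_def p0_def by simp
  qed
  have xi_p0: "xi mu C R p0 = xs"
    unfolding xi_def p0_def xs_def using s_pos mu_pos C_pos by (simp add: field_simps)
  have SWC_eq: "SWC lam mu C R p = f (min (xi mu C R p) lam)" for p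
  proof -
    have "lam * qC lam mu C R p = min (xi mu C R p) lam"
      unfolding qC_def using lam_pos by (simp add: min_def field_simps)
    then show ?thesis unfolding SWC_def SW_eq by simp
  qed
  have SWC_le: "SWC lam mu C R p \<le> f m" if "p \<in> A" for p
    unfolding SWC_eq using xi_pos[OF that] by (intro fmax) (auto simp: lam_pos less_imp_le)
  have optC: "opt mu C R (SWC lam mu C R) = f m"
    unfolding opt_def A_def[symmetric]
  proof (rule cSup_eq_maximum)
    show "f m \<in> SWC lam mu C R ` A" using p0A SWC_eq[of p0] xi_p0 unfolding m_def by force
  qed (use SWC_le in auto)
  have SWP_le: "SWP M L lam mu C R p \<le> f m" if "p \<in> A" for p
  proof (cases "integrable M (\<lambda>\<omega>. SW lam mu C R (QP mu C R p (L \<omega>)))")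
    case True
    have "SWP M L lam mu C R p \<le> (\<integral>\<omega>. f m \<partial>M)"
      unfolding SWP_def
    proof (rule integral_mono)
      fix \<omega> assume "\<omega> \<in> space M"
      have "0 \<le> QP mu C R p (L \<omega>) \<and> QP mu C R p (L \<omega>) \<le> 1"
        using xi_pos[OF that] unfolding QP_def by auto
      then show "SW lam mu C R (QP mu C R p (L \<omega>)) \<le> f m"
        unfolding SW_eq using lam_pos by (intro fmax) (auto simp: mult_left_le)
    qed (use True in auto)
    then show ?thesis by simp
  next
    case False
    then have "SWP M L lam mu C R p = 0" unfolding SWP_def by (rule not_integrable_integral_eq)
    moreover have "f 0 \<le> f m" using lam_pos by (intro fmax) auto
    ultimately show ?thesis by (simp add: f_def)
  qed
  have optP: "opt mu C R (SWP M L lam mu C R) \<le> f m"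
    unfolding opt_def A_def[symmetric] using A_ne SWP_le by (intro cSUP_least) auto

  note Lmeas[measurable]
  define g where "g q = (\<integral>\<omega>. W mu (q * L \<omega>) \<partial>M)" for q
  have AEb: "AE \<omega> in M. 0 \<le> L \<omega> \<and> L \<omega> \<le> lmax"
    using Lnonneg supp_bounds by eventually_elim auto
  have lmax_mu: "lmax < mu" using order by simp
  have Wmeas: "(\<lambda>\<omega>. W mu (q * L \<omega>)) \<in> borel_measurable M" for q unfolding W_def by measurable
  have Wbnd: "0 < mu - q * l \<and> W mu (q * l) \<le> 1 / (mu - lmax) \<and> 0 < W mu (q * l)"
    if "0 \<le> q" "q \<le> 1" "0 \<le> l" "l \<le> lmax" for q l
  proof -
    have "q * l \<le> l" using that by (auto intro: mult_left_le_one_le)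
    then have "mu - lmax \<le> mu - q * l" using that by linarith
    moreover have "0 < mu - lmax" using lmax_mu by simp
    ultimately show ?thesis unfolding W_def by (auto intro: divide_left_mono)
  qed
  have Wint: "integrable M (\<lambda>\<omega>. W mu (q * L \<omega>))" if "0 \<le> q" "q \<le> 1" for q
  proof (rule Bochner_Integration.integrable_bound[where f="\<lambda>_. 1 / (mu - lmax)"])
    show "AE \<omega> in M. norm (W mu (q * L \<omega>)) \<le> norm (1 / (mu - lmax))"
      using AEb
    proof eventually_elim
      case (elim \<omega>)
      then show ?case using Wbnd[OF that, of "L \<omega>"] lmax_mu by auto
    qed
  qed (auto intro: Wmeas)
  have g0: "g 0 = 1 / mu" unfolding g_def W_def by simp
  have Apos: "emeasure M {\<omega>\<in>space M. L \<omega> \<noteq> 0} \<noteq> 0"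
  proof
    assume "emeasure M {\<omega>\<in>space M. L \<omega> \<noteq> 0} = 0"
    then have "AE \<omega> in M. L \<omega> = 0"
      by (subst AE_iff_measurable[where N="{\<omega>\<in>space M. L \<omega> \<noteq> 0}"]) auto
    then show False using nondeg by blast
  qed
  have gmono: "g a < g b" if "0 \<le> a" "a < b" "b \<le> 1" for a b
    unfolding g_def
  proof (rule integral_less_AE[OF Wint Wint Apos])
    show "{\<omega>\<in>space M. L \<omega> \<noteq> 0} \<in> sets M" by measurable
    show "AE \<omega> in M. \<omega> \<in> {\<omega>\<in>space M. L \<omega> \<noteq> 0} \<longrightarrow> W mu (a * L \<omega>) \<noteq> W mu (b * L \<omega>)"
      using AEb
    proof eventually_elim
      case (elim \<omega>)
      have "0 < mu - a * L \<omega>" "0 < mu - b * L \<omega>"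
        using Wbnd[of a "L \<omega>"] Wbnd[of b "L \<omega>"] elim that by auto
      moreover have "L \<omega> \<noteq> 0 \<Longrightarrow> a * L \<omega> \<noteq> b * L \<omega>" using that by simp
      ultimately show ?case unfolding W_def by auto
    qed
    show "AE \<omega> in M. W mu (a * L \<omega>) \<le> W mu (b * L \<omega>)"
      using AEb
    proof eventually_elim
      case (elim \<omega>)
      have "0 < mu - b * L \<omega>" using Wbnd[of b "L \<omega>"] elim that by auto
      moreover have "a * L \<omega> \<le> b * L \<omega>" using that elim by (intro mult_right_mono) auto
      ultimately show ?case unfolding W_def by (intro divide_left_mono) auto
    qed
  qed (use that in auto)
  have gmono': "g a \<le> g b" if "0 \<le> a" "a \<le> b" "b \<le> 1" for a b
    using gmono[of a b] that by (cases "a = b") auto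
  define K where "K = lmax / (mu - lmax)^2"
  have K0: "0 \<le> K" unfolding K_def using order by simp
  have glip: "\<bar>g a - g b\<bar> \<le> K * \<bar>a - b\<bar>" if "0 \<le> a" "a \<le> 1" "0 \<le> b" "b \<le> 1" for a b
  proof -
    have "g a - g b = (\<integral>\<omega>. W mu (a * L \<omega>) - W mu (b * L \<omega>) \<partial>M)"
      unfolding g_def using Wint[of a] Wint[of b] that by (simp add: Bochner_Integration.integral_diff)
    then have "\<bar>g a - g b\<bar> \<le> (\<integral>\<omega>. \<bar>W mu (a * L \<omega>) - W mu (b * L \<omega>)\<bar> \<partial>M)"
      by (simp add: integral_abs_bound)
    also have "\<dots> \<le> (\<integral>\<omega>. K * \<bar>a - b\<bar> \<partial>M)"
    proof (rule integral_mono_AE)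
      show "AE \<omega> in M. \<bar>W mu (a * L \<omega>) - W mu (b * L \<omega>)\<bar> \<le> K * \<bar>a - b\<bar>"
        using AEb
      proof eventually_elim
        case (elim \<omega>)
        then show ?case unfolding K_def using lip_pt[of a b "L \<omega>" lmax mu] that lmax_mu by auto
      qed
    qed (use Wint that in auto)
    finally show ?thesis by simp
  qed
  have gcont: "continuous_on {0..1} g"
    unfolding continuous_on_iff
  proof (intro ballI allI impI)
    fix x e :: real assume x: "x \<in> {0..1}" and e: "0 < e"
    show "\<exists>d>0. \<forall>x'\<in>{0..1}. dist x' x < d \<longrightarrow> dist (g x') (g x) < e"
    proof (intro exI[of _ "e / (K + 1)"] conjI ballI impI)
      show "0 < e / (K + 1)" using e K0 by simp
      fix x' assume x': "x' \<in> {0..1}" and d: "dist x' x < e / (K + 1)"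
      have "dist (g x') (g x) \<le> K * dist x' x" using glip[of x' x] x x' by (simp add: dist_real_def)
      also have "\<dots> \<le> K * (e / (K + 1))" using d K0 by (intro mult_left_mono) auto
      also have "\<dots> < e" using e K0 by (simp add: field_simps)
      finally show "dist (g x') (g x) < e" .
    qed
  qed
  have qS_eq: "qS M L mu C R p = (if C * g 1 \<le> R - p then 1 else THE q. 0 \<le> q \<and> q < 1 \<and> C * g q = R - p)" for p
    unfolding qS_def g_def by simp
  have SWS_eq: "SWS M L lam mu C R p = f (lam * qS M L mu C R p)" for p
    unfolding SWS_def SW_eq ..
  have g1pos: "0 < g 1" using gmono[of 0 1] g0 mu_pos by (smt (verit) divide_pos_pos)
  define t where "t = m / lam"
  have t_pos: "0 < t" and t_le: "t \<le> 1" unfolding t_def using m_pos m_le lam_pos by auto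
  have lam_t: "lam * t = m" unfolding t_def using lam_pos by simp
  have claim: "C * g t \<le> R"
    using cases
  proof
    assume h: "lbar M L mu \<le> xi mu C R 0"
    have "mu - 1 / g 1 \<le> mu - C / R" using h unfolding lbar_def xi_def g_def W_def by simp
    then have "C / R \<le> 1 / g 1" by simp
    then have "C * g 1 \<le> R" using g1pos R_pos by (simp add: field_simps)
    moreover have "g t \<le> g 1" using t_pos t_le by (intro gmono') auto
    ultimately show ?thesis using C_pos by (meson mult_left_mono order_trans less_imp_le)
  next
    assume h: "xi mu C R 0 < lbar M L mu \<and> lmax \<le> (1 + sqrt (C / (R * mu))) * lam"
    then have lmaxb: "lmax \<le> (1 + s) * lam" unfolding s_def by simp
    have "g t \<le> (\<integral>\<omega>. R / C \<partial>M)"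
      unfolding g_def
    proof (rule integral_mono_AE)
      show "AE \<omega> in M. W mu (t * L \<omega>) \<le> R / C"
        using AEb
      proof eventually_elim
        case (elim \<omega>)
        have "t * L \<omega> \<le> (xs / lam) * lmax"
          using elim t_pos m_pos lam_pos xs_pos unfolding t_def m_def
          by (intro mult_mono divide_right_mono) auto
        also have "\<dots> \<le> (xs / lam) * ((1 + s) * lam)"
          using lmaxb xs_pos lam_pos by (intro mult_left_mono) auto
        also have "\<dots> = mu - C / R"
          unfolding xs_def using lam_pos s2 mu_pos R_pos
          by (simp add: field_simps power2_eq_square)
        finally have "C / R \<le> mu - t * L \<omega>" by simp
        moreover have "0 < C / R" using C_pos R_pos by simp
        ultimately have "1 / (mu - t * L \<omega>) \<le> 1 / (C / R)"
          by (intro divide_left_mono mult_pos_pos) auto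
        then show ?case unfolding W_def by simp
      qed
    qed (use Wint t_pos t_le in auto)
    then show ?thesis using C_pos by (simp add: field_simps)
  qed
  have SWS_le: "SWS M L lam mu C R p \<le> f m" if "p \<in> A" for p
  proof -
    have Rp: "R - p > C / mu" using that unfolding A_def by simp
    have "0 \<le> qS M L mu C R p \<and> qS M L mu C R p \<le> 1"
    proof (cases "C * g 1 \<le> R - p")
      case True then show ?thesis unfolding qS_eq by simp
    next
      case False
      define y where "y = (R - p) / C"
      have y0: "g 0 \<le> y" unfolding g0 y_def using Rp C_pos mu_pos by (simp add: field_simps)
      have y1: "y < g 1" unfolding y_def using False C_pos by (simp add: field_simps)
      obtain q where q: "0 \<le> q" "q \<le> 1" "g q = y" using IVT'[OF y0 _ _ gcont] y1 by auto
      have "q \<noteq> 1" using q y1 by auto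
      then have qP: "0 \<le> q \<and> q < 1 \<and> C * g q = R - p" using q C_pos unfolding y_def by auto
      have "\<exists>!q. 0 \<le> q \<and> q < 1 \<and> C * g q = R - p"
      proof (rule ex1I[of _ q])
        fix q' assume q': "0 \<le> q' \<and> q' < 1 \<and> C * g q' = R - p"
        then have "C * g q' = C * g q" using qP by simp
        then have "g q' = g q" using C_pos by simp
        then show "q' = q" using gmono[of q q'] gmono[of q' q] q' qP
          by (cases q q' rule: linorder_cases) auto
      qed (rule qP)
      from theI'[OF this] show ?thesis using False unfolding qS_eq by simp
    qed
    then show ?thesis unfolding SWS_eq using lam_pos by (intro fmax) (auto simp: mult_left_le)
  qed
  have attain: "\<exists>p\<in>A. SWS M L lam mu C R p = f m"
  proof (cases "t = 1")
    case True
    then have "C * g 1 \<le> R" using claim by simp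
    then have "qS M L mu C R 0 = 1" unfolding qS_eq by simp
    then show ?thesis using A0 SWS_eq[of 0] lam_t True by auto
  next
    case False
    then have t1: "t < 1" using t_le by simp
    define p1 where "p1 = R - C * g t"
    have "g 0 < g t" using gmono[of 0 t] t_pos t1 by simp
    then have "C * (1 / mu) < C * g t" unfolding g0 using C_pos by (intro mult_strict_left_mono)
    then have "C / mu < C * g t" by simp
    then have p1A: "p1 \<in> A" unfolding A_def p1_def using claim by simp
    have "g t < g 1" using gmono[of t 1] t_pos t1 by simp
    then have nb: "\<not> C * g 1 \<le> R - p1" unfolding p1_def using C_pos by simp
    have "(THE q. 0 \<le> q \<and> q < 1 \<and> C * g q = R - p1) = t"
    proof (rule the_equality)
      show "0 \<le> t \<and> t < 1 \<and> C * g t = R - p1" using t_pos t1 unfolding p1_def by simp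
      fix q' assume q': "0 \<le> q' \<and> q' < 1 \<and> C * g q' = R - p1"
      then have "C * g q' = C * g t" unfolding p1_def by simp
      then have "g q' = g t" using C_pos by simp
      then show "q' = t" using gmono[of t q'] gmono[of q' t] q' t_pos t1
        by (cases t q' rule: linorder_cases) auto
    qed
    then have "qS M L mu C R p1 = t" unfolding qS_eq using nb by simp
    then show ?thesis using p1A SWS_eq[of p1] lam_t by auto
  qed
  have optS: "opt mu C R (SWS M L lam mu C R) = f m"
    unfolding opt_def A_def[symmetric]
  proof (rule cSup_eq_maximum)
    show "f m \<in> SWS M L lam mu C R ` A" using attain by force
  qed (use SWS_le in auto)
  show ?thesis using optC optP optS by simp
qed
end
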